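(* Let $\epsilon>0$ and let $u,\hat u:\mathbf{S}\to\mathbb{R}^{|P|}$ be two utility functions on the same finite game structure. Suppose that for all $(p,s)\in\mathcal{I}$, $|u_p(s)-\hat u_p(s)|\le\max\{\epsilon,\ \mathrm{Reg}_p(s;\hat u)/2\}$. Then for all $(p,s)\in\mathcal{I}$ with $\mathrm{Reg}_p(s;u)=0$, it holds that $|u_p(s)-\hat u_p(s)|\le\epsilon$.
   Context: A finite normal-form game structure: finite player set $P$, finite pure strategy sets $S_p$, $\mathbf{S}=\prod_pS_p$, index set $\mathcal{I}=P\times\mathbf{S}$. For a utility function $u$, pure profile $s$ and player $p$, $A_{p,s}$ is the set of pure profiles obtained from $s$ by replacing $p$'s strategy by any $t\in S_p$, and $\mathrm{Reg}_p(s;u)=\sup_{s'\in A_{p,s}}u_p(s')-u_p(s)$. *)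

theory Defs
  imports "HOL-Library.FuncSet" Complex_Main
begin

definition game_structure :: "'p set \<Rightarrow> ('p \<Rightarrow> 's set) \<Rightarrow> bool" where
  "game_structure P S \<longleftrightarrow> finite P \<and> (\<forall>p\<in>P. finite (S p))"

definition profiles :: "'p set \<Rightarrow> ('p \<Rightarrow> 's set) \<Rightarrow> ('p \<Rightarrow> 's) set" where
  "profiles P S = PiE P S"

definition deviations :: "('p \<Rightarrow> 's set) \<Rightarrow> 'p \<Rightarrow> ('p \<Rightarrow> 's) \<Rightarrow> ('p \<Rightarrow> 's) set" where
  "deviations S p s = {s(p := t) | t. t \<in> S p}"

definition regret :: "('p \<Rightarrow> 's set) \<Rightarrow> ('p \<Rightarrow> ('p \<Rightarrow> 's) \<Rightarrow> real) \<Rightarrow> 'p \<Rightarrow> ('p \<Rightarrow> 's) \<Rightarrow> real" where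
  "regret S u p s = (SUP s' \<in> deviations S p s. u p s') - u p s"

end

theory Submission
  imports Defs
begin

lemma dev_eq: "deviations S p s = (\<lambda>t. s(p := t)) ` S p"
  unfolding deviations_def by auto

lemma dev_same: "s' \<in> deviations S p s \<Longrightarrow> deviations S p s' = deviations S p s"
  unfolding deviations_def by auto

lemma sup_upper:
  assumes "finite (S p)" "x \<in> deviations S p s"
  shows "(f x::real) \<le> (SUP s' \<in> deviations S p s. f s')"
proof -
  have "finite (deviations S p s)" using assms(1) by (simp add: dev_eq)
  then have "bdd_above (f ` deviations S p s)" by (intro bdd_above_finite finite_imageI)
  then show ?thesis using assms(2) by (simp add: cSUP_upper)
qed

theorem lemma4:
  fixes P :: "'p set" and S :: "'p \<Rightarrow> 's set"
    and u uh :: "'p \<Rightarrow> ('p \<Rightarrow> 's) \<Rightarrow> real" and \<epsilon> :: real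
  assumes "game_structure P S"
    and "\<epsilon> > 0"
    and "\<forall>p\<in>P. \<forall>s\<in>profiles P S. \<bar>u p s - uh p s\<bar> \<le> max \<epsilon> (regret S uh p s / 2)"
  shows "\<forall>p\<in>P. \<forall>s\<in>profiles P S. regret S u p s = 0 \<longrightarrow> \<bar>u p s - uh p s\<bar> \<le> \<epsilon>"
proof (intro ballI impI)
  fix p s assume p: "p \<in> P" and s: "s \<in> profiles P S" and r0: "regret S u p s = 0"
  let ?D = "deviations S p s"
  have fin: "finite (S p)" using assms(1) p unfolding game_structure_def by auto
  have finD: "finite ?D" using fin by (simp add: dev_eq)
  have sD: "s \<in> ?D" using s p unfolding profiles_def deviations_def
    by (auto simp: PiE_iff intro!: exI[of _ "s p"])
  have Dprof: "x \<in> profiles P S" if "x \<in> ?D" for x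
    using that s p unfolding profiles_def deviations_def by (auto simp: PiE_iff extensional_def)
  obtain ss where ssD: "ss \<in> ?D" and ssmax: "\<forall>x\<in>?D. uh p x \<le> uh p ss"
  proof -
    have "Max (uh p ` ?D) \<in> uh p ` ?D" using finD sD by (intro Max_in) auto
    then obtain ss where "ss \<in> ?D" "uh p ss = Max (uh p ` ?D)" by auto
    moreover have "\<forall>x\<in>?D. uh p x \<le> Max (uh p ` ?D)" using finD by auto
    ultimately show ?thesis using that by metis
  qed
  have supuh: "(SUP x \<in> ?D. uh p x) = uh p ss"
    using ssD ssmax by (intro antisym cSUP_least sup_upper[where S=S and p=p, OF fin]) auto
  have regss: "regret S uh p ss = 0"
    unfolding regret_def dev_same[OF ssD] supuh by simp
  have ss_close: "\<bar>u p ss - uh p ss\<bar> \<le> \<epsilon>"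
    using assms(3) p Dprof[OF ssD] regss assms(2) by force
  have "u p ss \<le> (SUP x \<in> ?D. u p x)" using sup_upper[where S=S and p=p, OF fin ssD] .
  hence uss: "u p ss \<le> u p s" using r0 unfolding regret_def by simp
  have hyp: "\<bar>u p s - uh p s\<bar> \<le> max \<epsilon> ((uh p ss - uh p s) / 2)"
    proof -
    have "\<bar>u p s - uh p s\<bar> \<le> max \<epsilon> (regret S uh p s / 2)" using assms(3) p s by blast
    then show ?thesis unfolding regret_def supuh .
  qed
  have "uh p s \<le> uh p ss" using ssmax sD by blast
  show "\<bar>u p s - uh p s\<bar> \<le> \<epsilon>"
  proof (rule ccontr)
    assume "\<not> ?thesis"
    then show False using hyp uss ss_close \<open>uh p s \<le> uh p ss\<close>
      by (auto simp: max_def abs_if split: if_splits)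
  qed
qed

end
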